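(* For every integer $m\ge 1$, the function $f:2^V\to\mathbb{R}$, $f(A)=\sum_{v\in V}m_A(v)$, is non-decreasing and submodular: for all $A\subseteq B\subseteq V$, $f(A)\le f(B)$, and for all $x\in V\setminus B$, $f(B\cup\{x\})-f(B)\le f(A\cup\{x\})-f(A)$.
   Context: $G=(V,E)$ is a finite simple undirected graph, $N(v)$ the neighborhood of $v$, $N_C(v)=N(v)\cap C$. $m_A(v)=m$ if [$v\notin A$ and $|N_A(v)|\ge m$] or [$v\in A$ and $|N_A(v)|>0$]; $m_A(v)=m-1$ if $v\in A$ and $|N_A(v)|=0$; and $m_A(v)=|N_A(v)|$ otherwise. *)

theory Defs
  imports Complex_Main
begin

definition simple_graph :: "'a set \<Rightarrow> ('a \<Rightarrow> 'a \<Rightarrow> bool) \<Rightarrow> bool" where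
  "simple_graph V E \<longleftrightarrow> finite V \<and> (\<forall>u v. E u v \<longrightarrow> u \<in> V \<and> v \<in> V)
     \<and> (\<forall>u v. E u v \<longrightarrow> E v u) \<and> (\<forall>v. \<not> E v v)"

definition nbhd :: "'a set \<Rightarrow> ('a \<Rightarrow> 'a \<Rightarrow> bool) \<Rightarrow> 'a \<Rightarrow> 'a set" where
  "nbhd V E v = {u \<in> V. E v u}"

definition nbhd_in :: "'a set \<Rightarrow> ('a \<Rightarrow> 'a \<Rightarrow> bool) \<Rightarrow> 'a set \<Rightarrow> 'a \<Rightarrow> 'a set" where
  "nbhd_in V E C v = nbhd V E v \<inter> C"

definition mval :: "'a set \<Rightarrow> ('a \<Rightarrow> 'a \<Rightarrow> bool) \<Rightarrow> nat \<Rightarrow> 'a set \<Rightarrow> 'a \<Rightarrow> real" where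
  "mval V E m A v =
     (if (v \<notin> A \<and> card (nbhd_in V E A v) \<ge> m) \<or> (v \<in> A \<and> card (nbhd_in V E A v) > 0)
      then real m
      else if v \<in> A \<and> card (nbhd_in V E A v) = 0 then real m - 1
      else real (card (nbhd_in V E A v)))"

definition fval :: "'a set \<Rightarrow> ('a \<Rightarrow> 'a \<Rightarrow> bool) \<Rightarrow> nat \<Rightarrow> 'a set \<Rightarrow> real" where
  "fval V E m A = (\<Sum>v\<in>V. mval V E m A v)"

end

theory Submission
  imports Defs
begin

lemma fin_nb: "finite V \<Longrightarrow> finite (nbhd_in V E C v)"
  unfolding nbhd_in_def nbhd_def by simp

lemma card_nb_mono: "finite V \<Longrightarrow> A \<subseteq> B \<Longrightarrow> card (nbhd_in V E A v) \<le> card (nbhd_in V E B v)"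
  apply (rule card_mono[OF fin_nb]) apply assumption
  unfolding nbhd_in_def by auto

lemma card_nb_ins: "finite V \<Longrightarrow> x \<in> V \<Longrightarrow> x \<notin> A \<Longrightarrow>
  card (nbhd_in V E (A \<union> {x}) v) = card (nbhd_in V E A v) + (if E v x then 1 else 0)"
proof -
  assume f: "finite V" and x: "x \<in> V" "x \<notin> A"
  show ?thesis
  proof (cases "E v x")
    case True
    then have "nbhd_in V E (A \<union> {x}) v = insert x (nbhd_in V E A v)"
      using x unfolding nbhd_in_def nbhd_def by auto
    moreover have "x \<notin> nbhd_in V E A v" using x unfolding nbhd_in_def by auto
    ultimately show ?thesis using True fin_nb[OF f] by simp
  next
    case False
    then have "nbhd_in V E (A \<union> {x}) v = nbhd_in V E A v"
      unfolding nbhd_in_def nbhd_def by auto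
    then show ?thesis using False by simp
  qed
qed

lemma mval_mono: "finite V \<Longrightarrow> m \<ge> 1 \<Longrightarrow> A \<subseteq> B \<Longrightarrow> mval V E m A v \<le> mval V E m B v"
  using card_nb_mono[of V A B E v] unfolding mval_def
  by (auto split: if_splits)

lemma mval_sub: "finite V \<Longrightarrow> m \<ge> 1 \<Longrightarrow> A \<subseteq> B \<Longrightarrow> x \<in> V \<Longrightarrow> x \<notin> B \<Longrightarrow>
  mval V E m (B \<union> {x}) v - mval V E m B v \<le> mval V E m (A \<union> {x}) v - mval V E m A v"
proof -
  assume f: "finite V" and m: "m \<ge> 1" and AB: "A \<subseteq> B" and x: "x \<in> V" "x \<notin> B"
  have xA: "x \<notin> A" using AB x by auto
  have le: "card (nbhd_in V E A v) \<le> card (nbhd_in V E B v)" using card_nb_mono[OF f AB] .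
  note cA = card_nb_ins[OF f x(1) xA, of E v]
  note cB = card_nb_ins[OF f x, of E v]
  show ?thesis
    unfolding mval_def cA cB using le m AB x
    by (cases "v = x"; cases "v \<in> A"; cases "v \<in> B"; cases "E v x"; auto split: if_splits)
qed

theorem mainTheorem8:
  fixes V :: "'a set" and E :: "'a \<Rightarrow> 'a \<Rightarrow> bool" and m :: nat
  assumes "simple_graph V E" and "m \<ge> 1"
  shows "(\<forall>A B. A \<subseteq> B \<and> B \<subseteq> V \<longrightarrow> fval V E m A \<le> fval V E m B)
       \<and> (\<forall>A B x. A \<subseteq> B \<and> B \<subseteq> V \<and> x \<in> V - B \<longrightarrow>
            fval V E m (B \<union> {x}) - fval V E m B \<le> fval V E m (A \<union> {x}) - fval V E m A)"
proof -
  have f: "finite V" using assms(1) unfolding simple_graph_def by auto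
  show ?thesis
  proof (intro conjI allI impI)
    fix A B assume "A \<subseteq> B \<and> B \<subseteq> V"
    then show "fval V E m A \<le> fval V E m B"
      unfolding fval_def by (intro sum_mono mval_mono[OF f assms(2)]) auto
  next
    fix A B x assume h: "A \<subseteq> B \<and> B \<subseteq> V \<and> x \<in> V - B"
    have "(\<Sum>v\<in>V. mval V E m (B \<union> {x}) v - mval V E m B v)
        \<le> (\<Sum>v\<in>V. mval V E m (A \<union> {x}) v - mval V E m A v)"
      using h by (intro sum_mono mval_sub[OF f assms(2)]) auto
    then show "fval V E m (B \<union> {x}) - fval V E m B \<le> fval V E m (A \<union> {x}) - fval V E m A"
      unfolding fval_def by (simp add: sum_subtractf)
  qed
qed

end
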